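(* Let $h$ be the Hahn sequence space and let $\Delta:h\to h$ be the forward difference operator $(\Delta x)_k=x_k-x_{k+1}$. Then the spectrum of $\Delta$ on $h$ is $$\sigma(\Delta,h)=\{\alpha\in\mathbb{C}:|1-\alpha|\le 1\}.$$
   Context: Sequences are indexed by $\mathbb{N}=\{0,1,2,\dots\}$. The Hahn sequence space is $h=\{x=(x_k)\in\mathbb{C}^{\mathbb{N}}:\sum_{k=1}^\infty k|x_k-x_{k+1}|<\infty \text{ and } \lim_{k\to\infty}x_k=0\}$, a Banach space with the norm $\|x\|_h=\sum_k k|x_k-x_{k+1}|+\sup_k|x_k|$. The forward difference operator $\Delta$ is given by the infinite matrix with $1$ on the main diagonal, $-1$ on the first superdiagonal and $0$ elsewhere, i.e. $(\Delta x)_k=x_k-x_{k+1}$. For a bounded linear operator $T$ on a Banach space $X$, the spectrum $\sigma(T,X)$ is the set of $\alpha\in\mathbb{C}$ for which $\alpha I-T$ does not have a bounded inverse defined on all of $X$. *)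

theory Defs
  imports "HOL-Analysis.Analysis"
begin

text \<open>The Hahn sequence space h (sequences indexed by nat).  The k = 0 term
of the weighted sum has weight 0, so summing from 0 is the same as from 1.\<close>
definition hahn :: "(nat \<Rightarrow> complex) set" where
  "hahn = {x. summable (\<lambda>k. real k * cmod (x k - x (Suc k))) \<and> x \<longlonglongrightarrow> 0}"

definition hahn_norm :: "(nat \<Rightarrow> complex) \<Rightarrow> real" where
  "hahn_norm x = (\<Sum>k. real k * cmod (x k - x (Suc k))) + (SUP k. cmod (x k))"

definition fwd_diff :: "(nat \<Rightarrow> complex) \<Rightarrow> (nat \<Rightarrow> complex)" where
  "fwd_diff x = (\<lambda>k. x k - x (Suc k))"

definition has_bounded_inverse_on ::
  "'a set \<Rightarrow> ('a \<Rightarrow> real) \<Rightarrow> ('a \<Rightarrow> 'a) \<Rightarrow> bool" where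
  "has_bounded_inverse_on X nrm A \<longleftrightarrow>
     (\<exists>S. (\<forall>y\<in>X. S y \<in> X \<and> A (S y) = y) \<and> (\<forall>x\<in>X. S (A x) = x) \<and>
          (\<exists>C. \<forall>y\<in>X. nrm (S y) \<le> C * nrm y))"

definition seq_spectrum ::
  "(nat \<Rightarrow> complex) set \<Rightarrow> ((nat \<Rightarrow> complex) \<Rightarrow> real) \<Rightarrow>
   ((nat \<Rightarrow> complex) \<Rightarrow> (nat \<Rightarrow> complex)) \<Rightarrow> complex set" where
  "seq_spectrum X nrm T =
     {\<alpha>. \<not> has_bounded_inverse_on X nrm (\<lambda>x. (\<lambda>k. \<alpha> * x k - T x k))}"

end

theory Submission
  imports Defs
begin


lemma summable_k_pow:
  fixes r :: real assumes "0 \<le> r" "r < 1"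
  shows "summable (\<lambda>k. real k * r^k)"
proof -
  define s where "s = sqrt r"
  have s: "0 \<le> s" "s < 1" "r = s^2" using assms by (auto simp: s_def real_sqrt_lt_1_iff)
  have "(\<lambda>n. of_nat n * s ^ n) \<longlonglongrightarrow> (0::real)"
    by (rule powser_times_n_limit_0) (use s in auto)
  then have "Bseq (\<lambda>n. of_nat n * s ^ n)" by (rule convergent_imp_Bseq[OF convergentI])
  then obtain B where B: "\<And>n. norm (of_nat n * s ^ n) \<le> B" by (auto simp: Bseq_def)
  show ?thesis
  proof (rule summable_comparison_test[where g="\<lambda>n. B * s^n"])
    show "summable (\<lambda>n. B * s^n)" using s by (intro summable_mult summable_geometric) auto
    have "norm (real n * r ^ n) \<le> B * s ^ n" for n
    proof -
      have "norm (real n * r ^ n) = norm (of_nat n * s ^ n) * s^n"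
        using s by (simp add: power_mult[symmetric] power2_eq_square power_mult_distrib abs_mult mult_ac
             flip: power_mult)
      also have "\<dots> \<le> B * s^n" using B[of n] s by (intro mult_right_mono) auto
      finally show ?thesis .
    qed
    then show "\<exists>N. \<forall>n\<ge>N. norm (real n * r ^ n) \<le> B * s ^ n" by auto
  qed
qed

lemma sup_first:
  fixes z :: "nat \<Rightarrow> real"
  assumes "\<And>k. z k \<le> z 0"
  shows "(SUP k. z k) = z 0"
proof (rule antisym)
  show "(SUP k. z k) \<le> z 0" by (rule cSUP_least) (use assms in auto)
  show "z 0 \<le> (SUP k. z k)" by (rule cSUP_upper) (use assms in \<open>auto intro!: bdd_aboveI[where M="z 0"]\<close>)
qed

lemma geo_hahn_norm:
  fixes r c :: complex
  assumes r: "cmod r < 1"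
  shows "hahn_norm (\<lambda>k. c * r^k) = cmod c * ((\<Sum>k. real k * cmod r ^ k * cmod (1 - r)) + 1)"
    and "(\<lambda>k. c * r^k) \<in> hahn"
proof -
  have eq: "real k * cmod (c * r^k - c * r^Suc k) = cmod c * (real k * cmod r ^ k * cmod (1 - r))" for k
  proof -
    have "c * r^k - c * r^Suc k = c * r^k * (1 - r)" by (simp add: algebra_simps)
    then show ?thesis by (simp add: norm_mult norm_power mult_ac)
  qed
  have sm: "summable (\<lambda>k. real k * cmod r ^ k * cmod (1 - r))"
    using summable_k_pow[of "cmod r"] r by (intro summable_mult2) auto
  have s1: "(\<Sum>k. real k * cmod (c * r^k - c * r^Suc k)) = cmod c * (\<Sum>k. real k * cmod r ^ k * cmod (1 - r))"
    unfolding eq by (rule suminf_mult[OF sm])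
  have s2: "(SUP k. cmod (c * r^k)) = cmod c"
    using sup_first[of "\<lambda>k. cmod (c * r^k)"] r
    by (simp add: norm_mult norm_power mult_left_le power_le_one)
  show "hahn_norm (\<lambda>k. c * r^k) = cmod c * ((\<Sum>k. real k * cmod r ^ k * cmod (1 - r)) + 1)"
    unfolding hahn_norm_def s1 s2 by (simp add: algebra_simps)
  have "summable (\<lambda>k. real k * cmod (c * r^k - c * r^Suc k))"
    unfolding eq by (rule summable_mult[OF sm])
  moreover have "(\<lambda>k. c * r^k) \<longlonglongrightarrow> 0"
    using r by (intro tendsto_mult_right_zero LIMSEQ_power_zero) auto
  ultimately show "(\<lambda>k. c * r^k) \<in> hahn" unfolding hahn_def by auto
qed

lemma spectrum_supset:
  assumes "cmod (1 - \<alpha>) \<le> 1"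
  shows "\<alpha> \<in> seq_spectrum hahn hahn_norm fwd_diff"
  unfolding seq_spectrum_def mem_Collect_eq
proof
  define \<beta> where "\<beta> = \<alpha> - 1"
  have b: "cmod \<beta> \<le> 1" using assms by (simp add: \<beta>_def norm_minus_commute)
  assume "has_bounded_inverse_on hahn hahn_norm (\<lambda>x k. \<alpha> * x k - fwd_diff x k)"
  then obtain S C where S: "\<And>x. x \<in> hahn \<Longrightarrow> S ((\<lambda>x k. \<alpha> * x k - fwd_diff x k) x) = x"
    and C: "\<And>y. y \<in> hahn \<Longrightarrow> hahn_norm (S y) \<le> C * hahn_norm y"
    unfolding has_bounded_inverse_on_def by blast
  define t :: real where "t = max 0 (1 - 1 / (2 * (\<bar>C\<bar> + 1)))"
  have t: "0 \<le> t" "t < 1" "1 - t \<le> 1 / (2 * (\<bar>C\<bar> + 1))"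
    unfolding t_def by (auto simp: field_simps)
  define r where "r = - (of_real t * \<beta>)"
  have r: "cmod r < 1"
  proof -
    have "cmod r = t * cmod \<beta>" using t by (simp add: r_def norm_mult)
    also have "\<dots> \<le> t" using b t by (simp add: mult_left_le)
    finally show ?thesis using t by simp
  qed
  define \<delta> where "\<delta> = \<beta> * (1 - of_real t)"
  have \<delta>: "cmod \<delta> \<le> 1 - t"
  proof -
    have e: "(1 - of_real t :: complex) = of_real (1 - t)" by simp
    have "cmod \<delta> = cmod \<beta> * (1 - t)" using t unfolding \<delta>_def e norm_mult norm_of_real by simp
    also have "\<dots> \<le> 1 * (1 - t)" using b t by (intro mult_right_mono) auto
    finally show ?thesis by simp
  qed
  define x where "x = (\<lambda>k. (1::complex) * r^k)"
  have Ax: "(\<lambda>x k. \<alpha> * x k - fwd_diff x k) x = (\<lambda>k. \<delta> * r^k)"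
    by (auto simp: fun_eq_iff x_def fwd_diff_def \<delta>_def r_def \<beta>_def algebra_simps)
  have xh: "x \<in> hahn" unfolding x_def by (rule geo_hahn_norm(2)[OF r])
  have yh: "(\<lambda>k. \<delta> * r^k) \<in> hahn" by (rule geo_hahn_norm(2)[OF r])
  define N where "N = (\<Sum>k. real k * cmod r ^ k * cmod (1 - r)) + 1"
  have N: "N > 0" unfolding N_def
    using summable_k_pow[of "cmod r"] r
    by (intro add_nonneg_pos suminf_nonneg summable_mult2) auto
  have "hahn_norm x \<le> C * hahn_norm (\<lambda>k. \<delta> * r^k)"
    using C[OF yh] S[OF xh] unfolding Ax by simp
  then have "N \<le> C * (cmod \<delta> * N)"
    unfolding x_def geo_hahn_norm(1)[OF r] N_def by simp
  then have "1 \<le> C * cmod \<delta>" using N by (simp add: mult_ac)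
  moreover have "C * cmod \<delta> \<le> \<bar>C\<bar> * (1 - t)"
    using \<delta> by (intro order.trans[OF abs_ge_self[of "C * cmod \<delta>"]]) (simp add: abs_mult mult_left_mono)
  moreover have "\<bar>C\<bar> * (1 - t) \<le> \<bar>C\<bar> / (2 * (\<bar>C\<bar> + 1))"
    using mult_left_mono[OF t(3), of "\<bar>C\<bar>"] by simp
  moreover have "\<bar>C\<bar> / (2 * (\<bar>C\<bar> + 1)) < 1" by (simp add: divide_simps)
  ultimately show False by linarith
qed


lemma geo_bounded_summable:
  fixes q :: complex and z :: "nat \<Rightarrow> complex"
  assumes q: "cmod q < 1" and M: "\<And>n. cmod (z n) \<le> M"
  shows "summable (\<lambda>n. q^n * z n)" "summable (\<lambda>n. cmod q ^ n * cmod (z n))"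
proof -
  have g: "summable (\<lambda>n. cmod q ^ n * M)"
    using q by (intro summable_mult2 summable_geometric) auto
  have le: "norm (cmod q ^ n * cmod (z n)) \<le> cmod q ^ n * M" for n
    using M[of n] by (simp add: mult_left_mono)
  show s2: "summable (\<lambda>n. cmod q ^ n * cmod (z n))"
    by (rule summable_comparison_test[OF _ g]) (use le in auto)
  show "summable (\<lambda>n. q^n * z n)"
    by (rule summable_comparison_test[OF _ s2]) (auto simp: norm_mult norm_power)
qed

lemma tele:
  fixes \<beta> :: complex and z :: "nat \<Rightarrow> complex"
  assumes b: "cmod \<beta> > 1" and M: "\<And>n. cmod (z n) \<le> M"
  shows "(\<Sum>n. (-1/\<beta>)^n * z n) + (\<Sum>n. (-1/\<beta>)^n * z (Suc n)) / \<beta> = z 0"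
proof -
  define q where "q = -1/\<beta>"
  have b0: "\<beta> \<noteq> 0" using b by auto
  have q: "cmod q < 1" using b by (simp add: q_def norm_divide divide_less_eq)
  have s: "summable (\<lambda>n. q^n * z n)" by (rule geo_bounded_summable(1)[OF q M])
  have s': "summable (\<lambda>n. q^n * z (Suc n))" by (rule geo_bounded_summable(1)[OF q M])
  have "(\<Sum>n. q^(Suc n) * z (Suc n)) = (\<Sum>n. q^n * z n) - z 0"
    using suminf_split_head[OF s] by simp
  moreover have "(\<Sum>n. q^(Suc n) * z (Suc n)) = q * (\<Sum>n. q^n * z (Suc n))"
    using suminf_mult[OF s', of q] by (simp add: mult_ac)
  ultimately have "q * (\<Sum>n. q^n * z (Suc n)) = (\<Sum>n. q^n * z n) - z 0" by simp
  then show ?thesis unfolding q_def using b0 by (simp add: field_simps)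
qed

lemma hahn_bounded:
  assumes "y \<in> hahn" shows "\<exists>M. \<forall>n. cmod (y n) \<le> M"
proof -
  have "Bseq y" using assms unfolding hahn_def by (auto intro: convergent_imp_Bseq convergentI)
  then show ?thesis by (auto simp: Bseq_def)
qed

lemma spectrum_subset:
  assumes b: "cmod (1 - \<alpha>) > 1"
  shows "has_bounded_inverse_on hahn hahn_norm (\<lambda>x k. \<alpha> * x k - fwd_diff x k)"
proof -
  define \<beta> where "\<beta> = \<alpha> - 1"
  have b: "cmod \<beta> > 1" using b by (simp add: \<beta>_def norm_minus_commute)
  have b0: "\<beta> \<noteq> 0" using b by auto
  define q where "q = -1/\<beta>"
  have q: "cmod q < 1" using b by (simp add: q_def norm_divide divide_less_eq)
  have nq: "cmod q = 1 / cmod \<beta>" by (simp add: q_def norm_divide)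
  define L where "L = 1 / (cmod \<beta> - 1)"
  have L: "L > 0" using b by (simp add: L_def)
  have geoL: "(\<Sum>n. cmod q ^ n) / cmod \<beta> = L"
  proof -
    have g1: "(\<Sum>n. cmod q ^ n) = 1 / (1 - cmod q)" using q by (intro suminf_geometric) auto
    have "cmod \<beta> \<noteq> 0" "cmod \<beta> - 1 \<noteq> 0" using b by auto
    then show ?thesis unfolding g1 unfolding nq L_def by (simp add: field_simps)
  qed
  have sgeo: "summable (\<lambda>n. cmod q ^ n)" using q by (intro summable_geometric) auto
  define A where "A = (\<lambda>x k. \<alpha> * x k - fwd_diff x k)"
  have A: "A x k = \<beta> * x k + x (Suc k)" for x k
    by (simp add: A_def fwd_diff_def \<beta>_def algebra_simps)
  define R where "R = (\<lambda>y k. (\<Sum>n. q^n * y (k+n)) / \<beta>)"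
  have ARy: "A (R y) = y" if "\<exists>M. \<forall>n. cmod (y n) \<le> M" for y
  proof
    fix k
    from that obtain M where M: "\<And>n. cmod (y n) \<le> M" by auto
    have "A (R y) k = (\<Sum>n. q^n * y (k+n)) + (\<Sum>n. q^n * y (Suc k+n)) / \<beta>"
      using b0 by (simp add: A R_def)
    also have "\<dots> = y (k + 0)"
      using tele[OF b, of "\<lambda>n. y (k+n)" M] M unfolding q_def by simp
    finally show "A (R y) k = y k" by simp
  qed
  have RAx: "R (A x) = x" if "\<exists>M. \<forall>n. cmod (x n) \<le> M" for x
  proof
    fix k
    from that obtain M where M: "\<And>n. cmod (x n) \<le> M" by auto
    have s1: "summable (\<lambda>n. q^n * x (k+n))" by (rule geo_bounded_summable(1)[OF q]) (use M in auto)
    have s2: "summable (\<lambda>n. q^n * x (Suc k+n))" by (rule geo_bounded_summable(1)[OF q]) (use M in auto)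
    have "(\<Sum>n. q^n * A x (k+n)) = (\<Sum>n. \<beta> * (q^n * x (k+n)) + q^n * x (Suc k+n))"
      by (simp add: A algebra_simps)
    also have "\<dots> = \<beta> * (\<Sum>n. q^n * x (k+n)) + (\<Sum>n. q^n * x (Suc k+n))"
      using suminf_add[OF summable_mult[OF s1] s2] suminf_mult[OF s1] by simp
    finally have "R (A x) k = (\<Sum>n. q^n * x (k+n)) + (\<Sum>n. q^n * x (Suc k+n)) / \<beta>"
      using b0 by (simp add: R_def field_simps)
    also have "\<dots> = x (k + 0)"
      using tele[OF b, of "\<lambda>n. x (k+n)" M] M unfolding q_def by simp
    finally show "R (A x) k = x k" by simp
  qed
  have Rh: "R y \<in> hahn \<and> hahn_norm (R y) \<le> L * hahn_norm y" if yh: "y \<in> hahn" for y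
  proof -
    obtain M where M: "\<And>n. cmod (y n) \<le> M" using hahn_bounded[OF yh] by auto
    define x where "x = R y"
    define d where "d = fwd_diff y"
    define g where "g = (\<lambda>m. real m * cmod (d m))"
    define T where "T = suminf g"
    have gs: "summable g" using yh by (simp add: hahn_def g_def d_def fwd_diff_def)
    have g0: "0 \<le> g m" for m by (simp add: g_def)
    have gT: "g m \<le> T" for m
      using sum_le_suminf[OF gs, of "{m}"] g0 by (simp add: T_def)
    have T0: "0 \<le> T" using g0 gT order.trans by blast
    have dM: "cmod (d n) \<le> 2 * M" for n
      using norm_triangle_ineq4[of "y n" "y (Suc n)"] M[of n] M[of "Suc n"] by (simp add: d_def fwd_diff_def)
    have dx: "x k - x (Suc k) = (\<Sum>n. q^n * d (k+n)) / \<beta>" for k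
    proof -
      have s1: "summable (\<lambda>n. q^n * y (k+n))" by (rule geo_bounded_summable(1)[OF q]) (use M in auto)
      have s2: "summable (\<lambda>n. q^n * y (Suc k+n))" by (rule geo_bounded_summable(1)[OF q]) (use M in auto)
      have "x k - x (Suc k) = ((\<Sum>n. q^n * y (k+n)) - (\<Sum>n. q^n * y (Suc k+n))) / \<beta>"
        by (simp add: x_def R_def diff_divide_distrib)
      also have "\<dots> = (\<Sum>n. q^n * d (k+n)) / \<beta>"
        using suminf_diff[OF s1 s2] by (simp add: d_def fwd_diff_def right_diff_distrib)
      finally show ?thesis .
    qed
    define F where "F = (\<lambda>k. (\<Sum>n. cmod q ^ n * g (k+n)) / cmod \<beta>)"
    have Fs1: "summable (\<lambda>n. cmod q ^ n * g (k+n))" for k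
      by (rule summable_comparison_test[OF _ summable_mult2[OF sgeo, of T]])
         (use gT g0 in \<open>auto intro!: mult_left_mono\<close>)
    have F0: "0 \<le> F k" for k
      unfolding F_def using Fs1 g0 by (intro divide_nonneg_nonneg suminf_nonneg) auto
    have kdx: "real k * cmod (x k - x (Suc k)) \<le> F k" for k
    proof -
      have sd: "summable (\<lambda>n. cmod q ^ n * cmod (d (k+n)))"
        by (rule geo_bounded_summable(2)[OF q]) (use dM in auto)
      have dxle: "cmod (x k - x (Suc k)) \<le> (\<Sum>n. cmod q ^ n * cmod (d (k+n))) / cmod \<beta>"
        unfolding dx norm_divide
        using summable_norm[of "\<lambda>n. q^n * d (k+n)"] sd
        by (intro divide_right_mono) (auto simp: norm_mult norm_power)
      have "real k * cmod (x k - x (Suc k)) \<le> real k * (\<Sum>n. cmod q ^ n * cmod (d (k+n))) / cmod \<beta>"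
        using mult_left_mono[OF dxle, of "real k"] by simp
      also have "\<dots> = (\<Sum>n. real k * (cmod q ^ n * cmod (d (k+n)))) / cmod \<beta>"
        using suminf_mult[OF sd, of "real k"] by simp
      also have "\<dots> \<le> F k" unfolding F_def
      proof (intro divide_right_mono suminf_le)
        show "summable (\<lambda>n. real k * (cmod q ^ n * cmod (d (k+n))))" using sd by (rule summable_mult)
        show "summable (\<lambda>n. cmod q ^ n * g (k+n))" by (rule Fs1)
        fix n
        show "real k * (cmod q ^ n * cmod (d (k+n))) \<le> cmod q ^ n * g (k+n)"
        proof -
          have "real k * cmod (d (k+n)) \<le> real (k+n) * cmod (d (k+n))" by (intro mult_right_mono) auto
          then have "cmod q ^ n * (real k * cmod (d (k+n))) \<le> cmod q ^ n * (real (k+n) * cmod (d (k+n)))"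
            by (intro mult_left_mono) auto
          then show ?thesis unfolding g_def by (simp add: mult_ac)
        qed
      qed simp
      finally show ?thesis .
    qed
    have Fpart: "(\<Sum>k<N. F k) \<le> L * T" for N
    proof -
      have "(\<Sum>k<N. F k) = (\<Sum>n. \<Sum>k<N. cmod q ^ n * g (k+n)) / cmod \<beta>"
        unfolding F_def by (simp add: suminf_sum[OF Fs1] sum_divide_distrib)
      also have "\<dots> \<le> (\<Sum>n. cmod q ^ n * T) / cmod \<beta>"
      proof (intro divide_right_mono suminf_le)
        fix n
        have "(\<Sum>k<N. g (k+n)) = sum g ((\<lambda>k. k+n) ` {..<N})"
          by (subst sum.reindex) (auto simp: inj_on_def)
        also have "\<dots> \<le> T" unfolding T_def by (rule sum_le_suminf[OF gs]) (use g0 in auto)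
        finally show "(\<Sum>k<N. cmod q ^ n * g (k+n)) \<le> cmod q ^ n * T"
          by (simp add: sum_distrib_left[symmetric] mult_left_mono)
        show "summable (\<lambda>n. \<Sum>k<N. cmod q ^ n * g (k+n))" using Fs1 by (intro summable_sum) auto
        show "summable (\<lambda>n. cmod q ^ n * T)" using sgeo by (rule summable_mult2)
      qed simp
      also have "\<dots> = ((\<Sum>n. cmod q ^ n) * T) / cmod \<beta>" by (simp only: suminf_mult2[OF sgeo, of T])
      also have "\<dots> = L * T" by (subst geoL[symmetric]) simp
      finally show ?thesis .
    qed
    have Fs: "summable F"
    proof (rule bounded_imp_summable[of _ "L * T"])
      fix n show "0 \<le> F n" by (rule F0)
      show "(\<Sum>k\<le>n. F k) \<le> L * T" unfolding lessThan_Suc_atMost[symmetric] by (rule Fpart)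
    qed
    have FL: "suminf F \<le> L * T" by (rule suminf_le_const[OF Fs Fpart])
    have xs: "summable (\<lambda>k. real k * cmod (x k - x (Suc k)))"
      by (rule summable_comparison_test[OF _ Fs]) (use kdx in auto)
    have xsum: "(\<Sum>k. real k * cmod (x k - x (Suc k))) \<le> L * T"
      using suminf_le[OF kdx xs Fs] FL by linarith
    define My where "My = (SUP k. cmod (y k))"
    have bddy: "bdd_above (range (\<lambda>k. cmod (y k)))" using M by (auto intro!: bdd_aboveI)
    have yMy: "cmod (y k) \<le> My" for k unfolding My_def by (rule cSUP_upper[OF _ bddy]) auto
    have xk: "cmod (x k) \<le> L * My" for k
    proof -
      have sy: "summable (\<lambda>n. cmod q ^ n * cmod (y (k+n)))"
        by (rule geo_bounded_summable(2)[OF q]) (use M in auto)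
      have "cmod (x k) \<le> (\<Sum>n. cmod q ^ n * cmod (y (k+n))) / cmod \<beta>"
        unfolding x_def R_def norm_divide
        using summable_norm[of "\<lambda>n. q^n * y (k+n)"] sy
        by (intro divide_right_mono) (auto simp: norm_mult norm_power)
      also have "\<dots> \<le> (\<Sum>n. cmod q ^ n * My) / cmod \<beta>"
        by (intro divide_right_mono suminf_le summable_mult2 sgeo sy)
           (auto intro!: mult_left_mono yMy)
      also have "\<dots> = ((\<Sum>n. cmod q ^ n) * My) / cmod \<beta>" by (simp only: suminf_mult2[OF sgeo, of My])
      also have "\<dots> = L * My" by (subst geoL[symmetric]) simp
      finally show ?thesis .
    qed
    have xsup: "(SUP k. cmod (x k)) \<le> L * My" by (rule cSUP_least) (use xk in auto)
    have dxs: "summable (\<lambda>k. x k - x (Suc k))"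
    proof (rule summable_comparison_test'[OF xs, of 1])
      fix n :: nat assume "n \<ge> 1"
      then show "norm (x n - x (Suc n)) \<le> real n * cmod (x n - x (Suc n))"
        by (simp add: mult_le_cancel_right1)
    qed
    have "(\<lambda>k. \<Sum>j<k. x j - x (Suc j)) \<longlonglongrightarrow> (\<Sum>j. x j - x (Suc j))"
      using summable_LIMSEQ[OF dxs] .
    then have "(\<lambda>k. x 0 - (\<Sum>j<k. x j - x (Suc j))) \<longlonglongrightarrow> x 0 - (\<Sum>j. x j - x (Suc j))"
      by (intro tendsto_diff tendsto_const)
    then have xl: "x \<longlonglongrightarrow> x 0 - (\<Sum>j. x j - x (Suc j))"
      by (simp add: sum_lessThan_telescope')
    define l where "l = x 0 - (\<Sum>j. x j - x (Suc j))"
    have xl: "x \<longlonglongrightarrow> l" using xl by (simp add: l_def)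
    have y0: "y \<longlonglongrightarrow> 0" using yh by (simp add: hahn_def)
    have eqx: "x (Suc k) = y k - \<beta> * x k" for k
    proof -
      have "A (R y) = y" using ARy M by blast
      then have "A (R y) k = y k" by simp
      then show ?thesis unfolding A x_def by (simp add: algebra_simps)
    qed
    have t1: "(\<lambda>k. x (Suc k)) \<longlonglongrightarrow> l" using xl by (rule LIMSEQ_Suc)
    have t2: "(\<lambda>k. x (Suc k)) \<longlonglongrightarrow> 0 - \<beta> * l"
      unfolding eqx by (intro tendsto_diff tendsto_mult y0 xl tendsto_const)
    have "l = - \<beta> * l" using LIMSEQ_unique[OF t1 t2] by simp
    then have "l + \<beta> * l = 0" by (simp add: eq_neg_iff_add_eq_0)
    then have "l * (1 + \<beta>) = 0" by (simp add: algebra_simps)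
    moreover have "1 + \<beta> \<noteq> 0"
    proof
      assume "1 + \<beta> = 0" then have "\<beta> = -1" by (simp add: add_eq_0_iff)
      then show False using b by simp
    qed
    ultimately have "l = 0" by simp
    with xl have x0: "x \<longlonglongrightarrow> 0" by simp
    have xh: "x \<in> hahn" using xs x0 by (simp add: hahn_def)
    have "hahn_norm x \<le> L * T + L * My"
      unfolding hahn_norm_def using xsum xsup by linarith
    also have "\<dots> = L * hahn_norm y"
      by (simp add: hahn_norm_def T_def My_def g_def d_def fwd_diff_def algebra_simps)
    finally show ?thesis using xh by (simp add: x_def)
  qed
  show ?thesis
    unfolding has_bounded_inverse_on_def A_def[symmetric]
  proof (intro exI[of _ R] conjI ballI exI[of _ L])
    fix y assume "y \<in> hahn"
    then show "R y \<in> hahn" "A (R y) = y" "hahn_norm (R y) \<le> L * hahn_norm y"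
      using Rh ARy hahn_bounded by auto
  next
    fix x assume "x \<in> hahn"
    then show "R (A x) = x" using RAx hahn_bounded by auto
  qed
qed


theorem theorem4p1:
  shows "seq_spectrum hahn hahn_norm fwd_diff = {\<alpha>. cmod (1 - \<alpha>) \<le> 1}"
proof (intro set_eqI iffI)
  fix \<alpha> assume "\<alpha> \<in> seq_spectrum hahn hahn_norm fwd_diff"
  then show "\<alpha> \<in> {\<alpha>. cmod (1 - \<alpha>) \<le> 1}"
    using spectrum_subset[of \<alpha>] unfolding seq_spectrum_def by force
next
  fix \<alpha> assume "\<alpha> \<in> {\<alpha>. cmod (1 - \<alpha>) \<le> 1}"
  then show "\<alpha> \<in> seq_spectrum hahn hahn_norm fwd_diff" using spectrum_supset by simp
qed

end
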